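(* Let $\Phi:\ell^\infty(\mathbb Z)\to\ell^\infty(\mathbb Z)$ be a bounded linear map commuting with the backward shift $B$, $(Bv)_n=v_{n+1}$. Let $\phi_0(v)=\Phi(v)_0$ be its $0$-th coordinate functional (so that $\Phi(v)_n=\phi_0(B^nv)$ for all $n$), and decompose $\phi_0=\phi^{ac}+\phi^{s}$, where $\phi^{ac}$ is weak*-continuous (i.e. $\phi^{ac}(v)=\sum_n a_nv_n$ for some $a\in\ell^1(\mathbb Z)$) and $\phi^{s}$ is singular (i.e. $\phi^s$ vanishes on $c_0(\mathbb Z)$). Define $\Phi^{ac}(v)=(\phi^{ac}(B^nv))_{n\in\mathbb Z}$ and $\Phi^{s}(v)=(\phi^{s}(B^nv))_{n\in\mathbb Z}$. Then $\Phi^{ac}$ and $\Phi^s$ both commute with $B$, $\Phi^{ac}$ is weak*-continuous, $\Phi^{ac}(c_0(\mathbb Z))\subseteq c_0(\mathbb Z)$, $\Phi^{s}(c_0(\mathbb Z))=0$, and $\Phi=\Phi^{ac}+\Phi^{s}$. Moreover this is the unique decomposition of $\Phi$ as a sum of a weak*-continuous map and a singular map (a map annihilating $c_0(\mathbb Z)$).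
   Context: $c_0(\mathbb Z)\subseteq\ell^\infty(\mathbb Z)$ denotes the sequences tending to $0$ at $\pm\infty$. A linear map on $\ell^\infty(\mathbb Z)$ is called $\mathbb Z$-equivariant if it commutes with the backward shift $B$. *)

theory Defs
  imports "HOL-Analysis.Analysis"
begin

definition linf :: "(int \<Rightarrow> real) set" where
  "linf = {v. \<exists>C. \<forall>n. \<bar>v n\<bar> \<le> C}"

definition c0 :: "(int \<Rightarrow> real) set" where
  "c0 = {v. (v \<longlongrightarrow> 0) at_top \<and> (v \<longlongrightarrow> 0) at_bot}"

definition lone :: "(int \<Rightarrow> real) set" where
  "lone = {a. (\<lambda>n. \<bar>a n\<bar>) summable_on UNIV}"

definition supnorm :: "(int \<Rightarrow> real) \<Rightarrow> real" where
  "supnorm v = (SUP n. \<bar>v n\<bar>)"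

definition bshift :: "(int \<Rightarrow> real) \<Rightarrow> (int \<Rightarrow> real)" where
  "bshift v = (\<lambda>n. v (n + 1))"

definition bpow :: "int \<Rightarrow> (int \<Rightarrow> real) \<Rightarrow> (int \<Rightarrow> real)" where
  "bpow k v = (\<lambda>n. v (n + k))"

definition linear_on_linf :: "((int \<Rightarrow> real) \<Rightarrow> (int \<Rightarrow> real)) \<Rightarrow> bool" where
  "linear_on_linf F \<longleftrightarrow>
     (\<forall>u\<in>linf. \<forall>v\<in>linf. F (\<lambda>n. u n + v n) = (\<lambda>n. F u n + F v n)) \<and>
     (\<forall>c. \<forall>v\<in>linf. F (\<lambda>n. c * v n) = (\<lambda>n. c * F v n))"

definition bounded_linear_linf :: "((int \<Rightarrow> real) \<Rightarrow> (int \<Rightarrow> real)) \<Rightarrow> bool" where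
  "bounded_linear_linf \<Phi> \<longleftrightarrow> linear_on_linf \<Phi> \<and> (\<forall>v\<in>linf. \<Phi> v \<in> linf) \<and>
     (\<exists>C. \<forall>v\<in>linf. supnorm (\<Phi> v) \<le> C * supnorm v)"

definition commutes_B :: "((int \<Rightarrow> real) \<Rightarrow> (int \<Rightarrow> real)) \<Rightarrow> bool" where
  "commutes_B \<Phi> \<longleftrightarrow> (\<forall>v\<in>linf. \<Phi> (bshift v) = bshift (\<Phi> v))"

definition wstar_fun :: "((int \<Rightarrow> real) \<Rightarrow> real) \<Rightarrow> bool" where
  "wstar_fun \<phi> \<longleftrightarrow> (\<exists>a\<in>lone. \<forall>v\<in>linf. \<phi> v = (\<Sum>\<^sub>\<infinity>n. a n * v n))"

definition wstar_map :: "((int \<Rightarrow> real) \<Rightarrow> (int \<Rightarrow> real)) \<Rightarrow> bool" where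
  "wstar_map \<Psi> \<longleftrightarrow> linear_on_linf \<Psi> \<and> (\<forall>v\<in>linf. \<Psi> v \<in> linf) \<and>
     (\<forall>b\<in>lone. wstar_fun (\<lambda>v. \<Sum>\<^sub>\<infinity>n. b n * \<Psi> v n))"

definition singular_fun :: "((int \<Rightarrow> real) \<Rightarrow> real) \<Rightarrow> bool" where
  "singular_fun \<phi> \<longleftrightarrow> (\<forall>v\<in>c0. \<phi> v = 0)"

definition singular_map :: "((int \<Rightarrow> real) \<Rightarrow> (int \<Rightarrow> real)) \<Rightarrow> bool" where
  "singular_map \<Psi> \<longleftrightarrow> (\<forall>v\<in>c0. \<Psi> v = (\<lambda>n. 0))"

end

theory Submission
  imports Defs "HOL-Analysis.Analysis"
begin

lemma linfD: "v \<in> linf \<Longrightarrow> \<exists>C\<ge>0. \<forall>n. \<bar>v n\<bar> \<le> C"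
proof -
  assume "v \<in> linf"
  then obtain C where "\<forall>n. \<bar>v n\<bar> \<le> C" unfolding linf_def by auto
  then have "\<forall>n. \<bar>v n\<bar> \<le> max C 0" by (simp add: le_max_iff_disj)
  then show ?thesis by (intro exI[of _ "max C 0"]) simp
qed

lemma loneD: "a \<in> lone \<Longrightarrow> (\<lambda>n. \<bar>a n\<bar>) summable_on UNIV"
  unfolding lone_def by simp

lemma lone_summable: "a \<in> lone \<Longrightarrow> a summable_on UNIV"
  unfolding lone_def using summable_on_iff_abs_summable_on_real by auto

lemma prod_summable:
  assumes a: "a \<in> lone" and C: "\<And>n. \<bar>v n\<bar> \<le> C"
  shows "(\<lambda>n. a n * v n) summable_on UNIV"
proof -
  have s1: "(\<lambda>n. C * \<bar>a n\<bar>) summable_on UNIV"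
    using loneD[OF a] by (rule summable_on_cmult_right)
  have "\<And>n. norm (a n * v n) \<le> C * \<bar>a n\<bar>"
    by (simp add: abs_mult mult.commute[of _ "\<bar>a _\<bar>"] mult_left_mono C)
  then have "(\<lambda>n. norm (a n * v n)) summable_on UNIV"
    using Infinite_Sum.abs_summable_on_comparison_test'[OF s1, of "\<lambda>n. a n * v n"] by simp
  then show ?thesis using summable_on_iff_abs_summable_on_real by auto
qed

lemma prod_bound:
  assumes a: "a \<in> lone" and C: "\<And>n. \<bar>v n\<bar> \<le> C"
  shows "\<bar>\<Sum>\<^sub>\<infinity>n. a n * v n\<bar> \<le> C * (\<Sum>\<^sub>\<infinity>n. \<bar>a n\<bar>)"
proof -
  have s1: "(\<lambda>n. C * \<bar>a n\<bar>) summable_on UNIV"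
    using loneD[OF a] by (rule summable_on_cmult_right)
  have nb: "\<And>n. norm (a n * v n) \<le> C * \<bar>a n\<bar>"
    by (simp add: abs_mult mult.commute[of _ "\<bar>a _\<bar>"] mult_left_mono C)
  then have s2: "(\<lambda>n. norm (a n * v n)) summable_on UNIV"
    using Infinite_Sum.abs_summable_on_comparison_test'[OF s1, of "\<lambda>n. a n * v n"] by simp
  have "\<bar>\<Sum>\<^sub>\<infinity>n. a n * v n\<bar> \<le> (\<Sum>\<^sub>\<infinity>n. norm (a n * v n))"
    using norm_infsum_bound[of "\<lambda>n. a n * v n" UNIV] s2 by simp
  also have "\<dots> \<le> (\<Sum>\<^sub>\<infinity>n. C * \<bar>a n\<bar>)"
    by (rule infsum_mono[OF s2 s1]) (rule nb)
  also have "\<dots> = C * (\<Sum>\<^sub>\<infinity>n. \<bar>a n\<bar>)" by (rule infsum_cmult_right')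
  finally show ?thesis .
qed

lemma c0_linf: "v \<in> c0 \<Longrightarrow> v \<in> linf"
proof -
  assume "v \<in> c0"
  then have t: "(v \<longlongrightarrow> 0) at_top" "(v \<longlongrightarrow> 0) at_bot" unfolding c0_def by auto
  have "eventually (\<lambda>n. dist (v n) 0 < 1) at_top" using t(1) by (rule tendstoD) simp
  then obtain N where N: "\<And>n. n \<ge> N \<Longrightarrow> \<bar>v n\<bar> < 1" by (auto simp: eventually_at_top_linorder)
  have "eventually (\<lambda>n. dist (v n) 0 < 1) at_bot" using t(2) by (rule tendstoD) simp
  then obtain M where M: "\<And>n. n \<le> M \<Longrightarrow> \<bar>v n\<bar> < 1" by (auto simp: eventually_at_bot_linorder)
  have "\<bar>v n\<bar> \<le> 1 + (\<Sum>k\<in>{M..N}. \<bar>v k\<bar>)" for n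
  proof (cases "n \<in> {M..N}")
    case True
    then have "\<bar>v n\<bar> \<le> (\<Sum>k\<in>{M..N}. \<bar>v k\<bar>)"
      by (intro member_le_sum) auto
    then show ?thesis by simp
  next
    case False
    then have "n \<le> M \<or> n \<ge> N" by auto
    then have "\<bar>v n\<bar> < 1" using M N by blast
    moreover have "0 \<le> (\<Sum>k\<in>{M..N}. \<bar>v k\<bar>)" by (intro sum_nonneg) auto
    ultimately show ?thesis by linarith
  qed
  then show "v \<in> linf" unfolding linf_def by blast
qed

lemma bpow_linf: "v \<in> linf \<Longrightarrow> bpow k v \<in> linf"
proof -
  assume "v \<in> linf"
  then obtain C where "\<And>n. \<bar>v n\<bar> \<le> C" unfolding linf_def by auto
  then have "\<forall>n. \<bar>bpow k v n\<bar> \<le> C" unfolding bpow_def by simp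
  then show ?thesis unfolding linf_def by blast
qed

lemma shift_at_top: "filterlim (\<lambda>n::int. n + k) at_top at_top"
  unfolding filterlim_at_top
proof
  fix Z show "eventually (\<lambda>n. Z \<le> n + k) at_top"
    using eventually_ge_at_top[of "Z - k"] by eventually_elim simp
qed

lemma shift_at_bot: "filterlim (\<lambda>n::int. n + k) at_bot at_bot"
  unfolding filterlim_at_bot
proof
  fix Z show "eventually (\<lambda>n. n + k \<le> Z) at_bot"
    using eventually_le_at_bot[of "Z - k"] by eventually_elim simp
qed

lemma bpow_c0: "v \<in> c0 \<Longrightarrow> bpow k v \<in> c0"
proof -
  assume "v \<in> c0"
  then have t: "(v \<longlongrightarrow> 0) at_top" "(v \<longlongrightarrow> 0) at_bot" unfolding c0_def by auto
  have "((\<lambda>n. v (n + k)) \<longlongrightarrow> 0) at_top" by (rule filterlim_compose[OF t(1) shift_at_top])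
  moreover have "((\<lambda>n. v (n + k)) \<longlongrightarrow> 0) at_bot" by (rule filterlim_compose[OF t(2) shift_at_bot])
  ultimately show ?thesis unfolding c0_def bpow_def by simp
qed

definition delta :: "int \<Rightarrow> int \<Rightarrow> real" where
  "delta k = (\<lambda>n. if n = k then 1 else 0)"

lemma delta_c0: "delta k \<in> c0"
proof -
  have "eventually (\<lambda>n. delta k n = 0) at_top"
    using eventually_at_top_not_equal[of k] by eventually_elim (simp add: delta_def)
  moreover have "eventually (\<lambda>n. delta k n = 0) at_bot"
    using eventually_at_bot_not_equal[of k] by eventually_elim (simp add: delta_def)
  ultimately show ?thesis unfolding c0_def
    by (auto intro: tendsto_eventually)
qed

lemma delta_linf: "delta k \<in> linf" using c0_linf delta_c0 by blast

lemma infsum_delta: "(\<Sum>\<^sub>\<infinity>n. f n * delta k n) = f k"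
proof -
  have "(\<Sum>\<^sub>\<infinity>n. f n * delta k n) = (\<Sum>\<^sub>\<infinity>n\<in>{k}. f n * delta k n)"
    by (rule infsum_cong_neutral) (auto simp: delta_def)
  then show ?thesis by (simp add: delta_def)
qed

lemma infsum_delta': "(\<Sum>\<^sub>\<infinity>n. delta k n * f n) = f k"
  using infsum_delta[of f k] by (simp add: mult.commute)

lemma delta_lone: "delta k \<in> lone"
proof -
  have "(\<lambda>n. \<bar>delta k n\<bar>) summable_on {k}" by simp
  then have "(\<lambda>n. \<bar>delta k n\<bar>) summable_on UNIV"
    by (rule summable_on_cong_neutral[THEN iffD1, rotated -1]) (auto simp: delta_def)
  then show ?thesis unfolding lone_def by simp
qed

lemma bpow_bpow: "bpow i (bpow j v) = bpow (i + j) v"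
  unfolding bpow_def by (rule ext) (simp add: ac_simps)

lemma bpow_0: "bpow 0 v = v" unfolding bpow_def by simp

lemma bpow_Suc: "bpow (int (Suc j)) v = bshift (bpow (int j) v)"
  unfolding bpow_def bshift_def by (simp add: algebra_simps)

lemma comm_bpow_nat:
  assumes comm: "commutes_B \<Phi>" and v: "v \<in> linf"
  shows "\<Phi> (bpow (int j) v) = bpow (int j) (\<Phi> v)"
proof (induction j)
  case 0 then show ?case by (simp add: bpow_0)
next
  case (Suc j)
  have "\<Phi> (bpow (int (Suc j)) v) = \<Phi> (bshift (bpow (int j) v))" by (simp only: bpow_Suc)
  also have "\<dots> = bshift (\<Phi> (bpow (int j) v))"
    using comm bpow_linf[OF v] unfolding commutes_B_def by blast
  also have "\<dots> = bpow (int (Suc j)) (\<Phi> v)" using Suc by (simp only: bpow_Suc)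
  finally show ?case .
qed

lemma comm_bpow:
  assumes comm: "commutes_B \<Phi>" and v: "v \<in> linf"
  shows "\<Phi> (bpow k v) = bpow k (\<Phi> v)"
proof (cases "k \<ge> 0")
  case True
  define j where "j = nat k"
  have "k = int j" unfolding j_def using True by simp
  then show ?thesis using comm_bpow_nat[OF comm v] by simp
next
  case False
  define j where "j = nat (- k)"
  have k: "k = - int j" unfolding j_def using False by simp
  define w where "w = bpow k v"
  have w: "w \<in> linf" unfolding w_def by (rule bpow_linf[OF v])
  have e: "bpow (int j) w = v" unfolding w_def bpow_bpow k by (simp add: bpow_0)
  have "\<Phi> v = bpow (int j) (\<Phi> w)" using comm_bpow_nat[OF comm w, of j] unfolding e .
  then have "bpow k (\<Phi> v) = \<Phi> w" by (simp add: bpow_bpow k bpow_0)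
  then show ?thesis unfolding w_def by simp
qed

lemma reindex_sum:
  fixes a v :: "int \<Rightarrow> real" and n :: int
  shows "(\<Sum>\<^sub>\<infinity>m. a m * v (m + n)) = (\<Sum>\<^sub>\<infinity>k. a (k - n) * v k)"
proof -
  have "bij_betw (\<lambda>k. k - n) UNIV (UNIV::int set)"
    by (rule bij_betwI[of _ _ _ "\<lambda>m. m + n"]) auto
  from infsum_reindex_bij_betw[OF this, of "\<lambda>m. a m * v (m + n)"]
  show ?thesis by simp
qed

lemma lin_add:
  assumes a: "a \<in> lone" and u: "u \<in> linf" and v: "v \<in> linf"
  shows "(\<Sum>\<^sub>\<infinity>n. a n * (u n + v n)) = (\<Sum>\<^sub>\<infinity>n. a n * u n) + (\<Sum>\<^sub>\<infinity>n. a n * v n)"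
proof -
  obtain C where C: "\<And>n. \<bar>u n\<bar> \<le> C" using linfD[OF u] by auto
  obtain D where D: "\<And>n. \<bar>v n\<bar> \<le> D" using linfD[OF v] by auto
  have "(\<Sum>\<^sub>\<infinity>n. a n * (u n + v n)) = (\<Sum>\<^sub>\<infinity>n. a n * u n + a n * v n)"
    by (simp add: distrib_left)
  also have "\<dots> = (\<Sum>\<^sub>\<infinity>n. a n * u n) + (\<Sum>\<^sub>\<infinity>n. a n * v n)"
    by (rule infsum_add[OF prod_summable[OF a C] prod_summable[OF a D]])
  finally show ?thesis .
qed

lemma lin_mult:
  "(\<Sum>\<^sub>\<infinity>n. a n * (c * v n)) = c * (\<Sum>\<^sub>\<infinity>n. a n * (v n::real))"
proof -
  have "(\<Sum>\<^sub>\<infinity>n. a n * (c * v n)) = (\<Sum>\<^sub>\<infinity>n. c * (a n * v n))"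
    by (simp add: algebra_simps)
  also have "\<dots> = c * (\<Sum>\<^sub>\<infinity>n. a n * v n)" by (rule infsum_cmult_right')
  finally show ?thesis .
qed

lemma prod_bound_on:
  assumes a: "a \<in> lone" and C: "\<And>n. \<bar>v n\<bar> \<le> C"
  shows "\<bar>\<Sum>\<^sub>\<infinity>n\<in>A. a n * v n\<bar> \<le> C * (\<Sum>\<^sub>\<infinity>n\<in>A. \<bar>a n\<bar>)"
proof -
  have s0: "(\<lambda>n. \<bar>a n\<bar>) summable_on A"
    using loneD[OF a] by (rule summable_on_subset_banach) simp
  have s1: "(\<lambda>n. C * \<bar>a n\<bar>) summable_on A"
    using s0 by (rule summable_on_cmult_right)
  have nb: "\<And>n. norm (a n * v n) \<le> C * \<bar>a n\<bar>"
    by (simp add: abs_mult mult.commute[of _ "\<bar>a _\<bar>"] mult_left_mono C)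
  then have s2: "(\<lambda>n. norm (a n * v n)) summable_on A"
    using Infinite_Sum.abs_summable_on_comparison_test'[OF s1, of "\<lambda>n. a n * v n"] by simp
  have "\<bar>\<Sum>\<^sub>\<infinity>n\<in>A. a n * v n\<bar> \<le> (\<Sum>\<^sub>\<infinity>n\<in>A. norm (a n * v n))"
    using norm_infsum_bound[of "\<lambda>n. a n * v n" A] s2 by simp
  also have "\<dots> \<le> (\<Sum>\<^sub>\<infinity>n\<in>A. C * \<bar>a n\<bar>)"
    by (rule infsum_mono[OF s2 s1]) (rule nb)
  also have "\<dots> = C * (\<Sum>\<^sub>\<infinity>n\<in>A. \<bar>a n\<bar>)" by (rule infsum_cmult_right')
  finally show ?thesis .
qed

lemma prod_summable_on:
  assumes a: "a \<in> lone" and C: "\<And>n. \<bar>v n\<bar> \<le> C"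
  shows "(\<lambda>n. a n * v n) summable_on A"
  using prod_summable[OF a C] by (rule summable_on_subset_banach) simp

lemma dominated_tendsto:
  fixes w :: "'b \<Rightarrow> int \<Rightarrow> real"
  assumes a: "a \<in> lone" and C: "\<And>n m. \<bar>w n m\<bar> \<le> C"
    and lim: "\<And>m. ((\<lambda>n. w n m) \<longlongrightarrow> 0) F"
  shows "((\<lambda>n. \<Sum>\<^sub>\<infinity>m. a m * w n m) \<longlongrightarrow> 0) F"
proof (rule tendstoI)
  fix e :: real assume e: "e > 0"
  have C0: "C \<ge> 0" using C[of undefined 0] by simp
  define d where "d = e / (2 * (C + 1))"
  have d: "d > 0" unfolding d_def using e C0 by simp
  obtain S where S: "finite S" "dist (sum (\<lambda>n. \<bar>a n\<bar>) S) (\<Sum>\<^sub>\<infinity>n. \<bar>a n\<bar>) \<le> d"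
    using infsum_finite_approximation[OF loneD[OF a] d] by auto
  have sa: "(\<lambda>n. \<bar>a n\<bar>) summable_on UNIV" by (rule loneD[OF a])
  have sc: "(\<lambda>n. \<bar>a n\<bar>) summable_on (- S)"
    using sa by (rule summable_on_subset_banach) simp
  have "(\<Sum>\<^sub>\<infinity>n. \<bar>a n\<bar>) = (\<Sum>\<^sub>\<infinity>n\<in>S \<union> - S. \<bar>a n\<bar>)" by simp
  also have "\<dots> = (\<Sum>\<^sub>\<infinity>n\<in>S. \<bar>a n\<bar>) + (\<Sum>\<^sub>\<infinity>n\<in>- S. \<bar>a n\<bar>)"
    by (rule infsum_Un_disjoint) (use S sc in auto)
  finally have tail: "(\<Sum>\<^sub>\<infinity>n\<in>- S. \<bar>a n\<bar>) \<le> d"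
    using S by (simp add: dist_real_def)
  have split: "(\<Sum>\<^sub>\<infinity>m. a m * w n m) = (\<Sum>m\<in>S. a m * w n m) + (\<Sum>\<^sub>\<infinity>m\<in>- S. a m * w n m)" for n
  proof -
    have "(\<Sum>\<^sub>\<infinity>m. a m * w n m) = (\<Sum>\<^sub>\<infinity>m\<in>S \<union> - S. a m * w n m)" by simp
    also have "\<dots> = (\<Sum>\<^sub>\<infinity>m\<in>S. a m * w n m) + (\<Sum>\<^sub>\<infinity>m\<in>- S. a m * w n m)"
      by (rule infsum_Un_disjoint) (use S prod_summable_on[OF a C] in auto)
    finally show ?thesis using S by simp
  qed
  have tb: "\<bar>\<Sum>\<^sub>\<infinity>m\<in>- S. a m * w n m\<bar> \<le> C * d" for n
  proof -
    have "\<bar>\<Sum>\<^sub>\<infinity>m\<in>- S. a m * w n m\<bar> \<le> C * (\<Sum>\<^sub>\<infinity>m\<in>- S. \<bar>a m\<bar>)"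
      by (rule prod_bound_on[OF a C])
    also have "\<dots> \<le> C * d" using mult_left_mono[OF tail C0] .
    finally show ?thesis .
  qed
  have Cd: "C * d < e / 2"
  proof -
    have "C * d = e * C / (2 * (C + 1))" unfolding d_def using C0 by (simp add: field_simps)
    also have "\<dots> < e * (C + 1) / (2 * (C + 1))"
      using C0 e by (intro divide_strict_right_mono) auto
    also have "\<dots> = e / 2" using C0 by (simp add: field_simps)
    finally show ?thesis .
  qed
  have "((\<lambda>n. \<Sum>m\<in>S. a m * w n m) \<longlongrightarrow> 0) F"
    by (intro tendsto_null_sum tendsto_mult_right_zero lim)
  then have "eventually (\<lambda>n. dist (\<Sum>m\<in>S. a m * w n m) 0 < e / 2) F"
    using e by (intro tendstoD) auto
  then show "eventually (\<lambda>n. dist (\<Sum>\<^sub>\<infinity>m. a m * w n m) 0 < e) F"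
  proof eventually_elim
    case (elim n)
    have "\<bar>\<Sum>\<^sub>\<infinity>m. a m * w n m\<bar> \<le> \<bar>\<Sum>m\<in>S. a m * w n m\<bar> + \<bar>\<Sum>\<^sub>\<infinity>m\<in>- S. a m * w n m\<bar>"
      unfolding split by (rule abs_triangle_ineq)
    also have "\<dots> < e / 2 + e / 2" using elim tb[of n] Cd by simp
    finally show ?case by simp
  qed
qed

lemma conv_c0:
  assumes a: "a \<in> lone" and v: "v \<in> c0"
  shows "(\<lambda>n. \<Sum>\<^sub>\<infinity>m. a m * v (m + n)) \<in> c0"
proof -
  obtain C where C: "\<And>n. \<bar>v n\<bar> \<le> C" using linfD[OF c0_linf[OF v]] by auto
  have t: "(v \<longlongrightarrow> 0) at_top" "(v \<longlongrightarrow> 0) at_bot" using v unfolding c0_def by auto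
  have "((\<lambda>n. \<Sum>\<^sub>\<infinity>m. a m * v (m + n)) \<longlongrightarrow> 0) at_top"
  proof (rule dominated_tendsto[OF a])
    fix m show "((\<lambda>n. v (m + n)) \<longlongrightarrow> 0) at_top"
      using filterlim_compose[OF t(1) shift_at_top[of m]] by (simp add: add.commute)
  qed (rule C)
  moreover have "((\<lambda>n. \<Sum>\<^sub>\<infinity>m. a m * v (m + n)) \<longlongrightarrow> 0) at_bot"
  proof (rule dominated_tendsto[OF a])
    fix m show "((\<lambda>n. v (m + n)) \<longlongrightarrow> 0) at_bot"
      using filterlim_compose[OF t(2) shift_at_bot[of m]] by (simp add: add.commute)
  qed (rule C)
  ultimately show ?thesis unfolding c0_def by simp
qed

lemma conv_wstar:
  fixes a b :: "int \<Rightarrow> real"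
  assumes a: "a \<in> lone" and b: "b \<in> lone"
  shows "\<exists>c\<in>lone. \<forall>v\<in>linf. (\<Sum>\<^sub>\<infinity>n. b n * (\<Sum>\<^sub>\<infinity>m. a m * v (m + n))) = (\<Sum>\<^sub>\<infinity>k. c k * v k)"
proof -
  define SA where "SA = (\<Sum>\<^sub>\<infinity>k. \<bar>a k\<bar>)"
  define G where "G = (\<lambda>(n::int, k::int). \<bar>b n\<bar> * \<bar>a (k - n)\<bar>)"
  have inner: "((\<lambda>k. G (n, k)) has_sum (\<bar>b n\<bar> * SA)) UNIV" for n
  proof -
    have bij: "bij_betw (\<lambda>k. k - n) UNIV (UNIV::int set)"
      by (rule bij_betwI[of _ _ _ "\<lambda>m. m + n"]) auto
    have "((\<lambda>k. \<bar>a k\<bar>) has_sum SA) UNIV" unfolding SA_def using loneD[OF a] by simp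
    then have "((\<lambda>k. \<bar>a (k - n)\<bar>) has_sum SA) UNIV"
      using has_sum_reindex_bij_betw[OF bij, of "\<lambda>k. \<bar>a k\<bar>" SA] by simp
    then show ?thesis unfolding G_def by (simp add: has_sum_cmult_right)
  qed
  have Gsum: "G summable_on (UNIV \<times> UNIV)"
  proof (rule summable_on_SigmaI[where g = "\<lambda>n. \<bar>b n\<bar> * SA"])
    show "(\<lambda>n. \<bar>b n\<bar> * SA) summable_on UNIV"
      using loneD[OF b] by (rule summable_on_cmult_left)
  qed (use inner in \<open>auto simp: G_def\<close>)
  define G' where "G' = (\<lambda>(k::int, n::int). G (n, k))"
  have G'sum: "G' summable_on (UNIV \<times> UNIV)"
    using Gsum summable_on_swap[of G UNIV UNIV] unfolding G'_def by simp
  have G'inner: "(\<lambda>n. G' (k, n)) summable_on UNIV" for k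
    using summable_on_SigmaD1[of "\<lambda>k n. G' (k, n)" UNIV "\<lambda>_. UNIV" k] G'sum by simp
  define H where "H = (\<lambda>k. \<Sum>\<^sub>\<infinity>n. G' (k, n))"
  have Hsum: "H summable_on UNIV"
    unfolding H_def using summable_on_SigmaD[of G' UNIV "\<lambda>_. UNIV"] G'sum G'inner by simp
  define c where "c = (\<lambda>k. \<Sum>\<^sub>\<infinity>n. b n * a (k - n))"
  have cb: "norm (c k) \<le> H k" for k
  proof -
    have "(\<lambda>n. norm (b n * a (k - n))) summable_on UNIV"
      using G'inner[of k] unfolding G'_def G_def by (simp add: abs_mult)
    then have "norm (c k) \<le> (\<Sum>\<^sub>\<infinity>n. norm (b n * a (k - n)))"
      unfolding c_def by (rule norm_infsum_bound)
    also have "\<dots> = H k" unfolding H_def G'_def G_def by (simp add: abs_mult)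
    finally show ?thesis .
  qed
  have clone: "c \<in> lone"
  proof -
    have "(\<lambda>k. norm (c k)) summable_on UNIV"
      by (rule Infinite_Sum.abs_summable_on_comparison_test'[OF Hsum cb])
    then show ?thesis unfolding lone_def by simp
  qed
  show ?thesis
  proof (intro bexI[OF _ clone] ballI)
    fix v assume v: "v \<in> linf"
    obtain C where C: "\<And>n. \<bar>v n\<bar> \<le> C" "C \<ge> 0" using linfD[OF v] by auto
    define F where "F = (\<lambda>n k. b n * (a (k - n) * v k))"
    have Fsum: "(\<lambda>(n, k). F n k) summable_on (UNIV \<times> UNIV)"
    proof -
      have s1: "(\<lambda>p. C * G p) summable_on (UNIV \<times> UNIV)"
        using Gsum by (rule summable_on_cmult_right)
      have "norm ((\<lambda>(n, k). F n k) p) \<le> C * G p" for p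
      proof -
        obtain n k where p: "p = (n, k)" by (cases p)
        have "\<bar>b n\<bar> * (\<bar>a (k - n)\<bar> * \<bar>v k\<bar>) \<le> \<bar>b n\<bar> * (\<bar>a (k - n)\<bar> * C)"
          by (intro mult_left_mono C(1)) auto
        then show ?thesis unfolding p F_def G_def by (simp add: abs_mult algebra_simps)
      qed
      then have "(\<lambda>p. norm ((\<lambda>(n, k). F n k) p)) summable_on (UNIV \<times> UNIV)"
        by (rule Infinite_Sum.abs_summable_on_comparison_test'[OF s1])
      then show ?thesis using summable_on_iff_abs_summable_on_real by blast
    qed
    have "(\<Sum>\<^sub>\<infinity>n. b n * (\<Sum>\<^sub>\<infinity>m. a m * v (m + n))) = (\<Sum>\<^sub>\<infinity>n. b n * (\<Sum>\<^sub>\<infinity>k. a (k - n) * v k))"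
      by (simp add: reindex_sum)
    also have "\<dots> = (\<Sum>\<^sub>\<infinity>n. \<Sum>\<^sub>\<infinity>k. F n k)"
      unfolding F_def by (simp add: infsum_cmult_right')
    also have "\<dots> = (\<Sum>\<^sub>\<infinity>k. \<Sum>\<^sub>\<infinity>n. F n k)"
      by (rule infsum_swap_banach[OF Fsum])
    also have "\<dots> = (\<Sum>\<^sub>\<infinity>k. c k * v k)"
    proof (rule infsum_cong)
      fix k
      have "(\<Sum>\<^sub>\<infinity>n. F n k) = (\<Sum>\<^sub>\<infinity>n. (b n * a (k - n)) * v k)"
        unfolding F_def by (simp add: mult.assoc)
      also have "\<dots> = c k * v k" unfolding c_def by (rule infsum_cmult_left')
      finally show "(\<Sum>\<^sub>\<infinity>n. F n k) = c k * v k" .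
    qed
    finally show "(\<Sum>\<^sub>\<infinity>n. b n * (\<Sum>\<^sub>\<infinity>m. a m * v (m + n))) = (\<Sum>\<^sub>\<infinity>k. c k * v k)" .
  qed
qed

lemma linf_add: "u \<in> linf \<Longrightarrow> v \<in> linf \<Longrightarrow> (\<lambda>n. u n + v n) \<in> linf"
proof -
  assume u: "u \<in> linf" and v: "v \<in> linf"
  obtain C where C: "\<And>n. \<bar>u n\<bar> \<le> C" using linfD[OF u] by auto
  obtain D where D: "\<And>n. \<bar>v n\<bar> \<le> D" using linfD[OF v] by auto
  have "\<forall>n. \<bar>u n + v n\<bar> \<le> C + D"
    using C D by (meson abs_triangle_ineq add_mono order_trans)
  then show ?thesis unfolding linf_def by blast
qed

lemma linf_mult: "v \<in> linf \<Longrightarrow> (\<lambda>n. c * v n) \<in> linf"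
proof -
  assume v: "v \<in> linf"
  obtain D where D: "\<And>n. \<bar>v n\<bar> \<le> D" using linfD[OF v] by auto
  have "\<forall>n. \<bar>c * v n\<bar> \<le> \<bar>c\<bar> * D"
    using D by (simp add: abs_mult mult_left_mono)
  then show ?thesis unfolding linf_def by blast
qed

theorem proposition2p1:
  fixes \<Phi> :: "(int \<Rightarrow> real) \<Rightarrow> (int \<Rightarrow> real)"
    and \<phi>ac \<phi>s :: "(int \<Rightarrow> real) \<Rightarrow> real"
  assumes bl: "bounded_linear_linf \<Phi>"
    and comm: "commutes_B \<Phi>"
    and decomp: "\<forall>v\<in>linf. \<Phi> v 0 = \<phi>ac v + \<phi>s v"
    and ac: "wstar_fun \<phi>ac"
    and sing: "singular_fun \<phi>s"
  defines "\<Phi>ac \<equiv> (\<lambda>v. \<lambda>n. \<phi>ac (bpow n v))"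
    and "\<Phi>s \<equiv> (\<lambda>v. \<lambda>n. \<phi>s (bpow n v))"
  shows "commutes_B \<Phi>ac \<and> commutes_B \<Phi>s \<and> wstar_map \<Phi>ac
    \<and> (\<forall>v\<in>c0. \<Phi>ac v \<in> c0) \<and> singular_map \<Phi>s
    \<and> (\<forall>v\<in>linf. \<Phi> v = (\<lambda>n. \<Phi>ac v n + \<Phi>s v n))
    \<and> (\<forall>\<Psi>1 \<Psi>2. wstar_map \<Psi>1 \<and> singular_map \<Psi>2
          \<and> (\<forall>v\<in>linf. \<Phi> v = (\<lambda>n. \<Psi>1 v n + \<Psi>2 v n))
        \<longrightarrow> (\<forall>v\<in>linf. \<Psi>1 v = \<Phi>ac v \<and> \<Psi>2 v = \<Phi>s v))"
proof -
  obtain a where a: "a \<in> lone" and ha: "\<And>v. v \<in> linf \<Longrightarrow> \<phi>ac v = (\<Sum>\<^sub>\<infinity>n. a n * v n)"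
    using ac unfolding wstar_fun_def by blast
  have Phiac_eq: "\<Phi>ac v = (\<lambda>n. \<Sum>\<^sub>\<infinity>m. a m * v (m + n))" if v: "v \<in> linf" for v
  proof
    fix n
    show "\<Phi>ac v n = (\<Sum>\<^sub>\<infinity>m. a m * v (m + n))"
      unfolding \<Phi>ac_def using ha[OF bpow_linf[OF v, of n]] by (simp add: bpow_def)
  qed
  have bpow_bshift: "bpow n (bshift v) = bpow (n + 1) v" for n v
    unfolding bpow_def bshift_def by (rule ext) (simp add: ac_simps)
  have dec: "\<Phi> v = (\<lambda>n. \<Phi>ac v n + \<Phi>s v n)" if v: "v \<in> linf" for v
  proof
    fix n
    have "\<Phi> v n = bpow n (\<Phi> v) 0" by (simp add: bpow_def)
    also have "\<dots> = \<Phi> (bpow n v) 0" using comm_bpow[OF comm v, of n] by simp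
    also have "\<dots> = \<phi>ac (bpow n v) + \<phi>s (bpow n v)" using decomp bpow_linf[OF v] by blast
    finally show "\<Phi> v n = \<Phi>ac v n + \<Phi>s v n" unfolding \<Phi>ac_def \<Phi>s_def by simp
  qed
  have c1: "commutes_B \<Phi>ac"
    unfolding commutes_B_def \<Phi>ac_def bshift_def
    by (auto simp: bpow_bshift[unfolded bshift_def] add.commute)
  have c2: "commutes_B \<Phi>s"
    unfolding commutes_B_def \<Phi>s_def bshift_def
    by (auto simp: bpow_bshift[unfolded bshift_def] add.commute)
  have bnd: "\<Phi>ac v \<in> linf" if v: "v \<in> linf" for v
  proof -
    obtain C where C: "\<And>n. \<bar>v n\<bar> \<le> C" using linfD[OF v] by auto
    have "\<forall>n. \<bar>\<Phi>ac v n\<bar> \<le> C * (\<Sum>\<^sub>\<infinity>m. \<bar>a m\<bar>)"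
      unfolding Phiac_eq[OF v] using prod_bound[OF a, of "\<lambda>m. v (m + _)"] C by blast
    then show ?thesis unfolding linf_def by blast
  qed
  have lin: "linear_on_linf \<Phi>ac"
    unfolding linear_on_linf_def
  proof (intro conjI ballI allI)
    fix u v assume u: "u \<in> linf" and v: "v \<in> linf"
    show "\<Phi>ac (\<lambda>n. u n + v n) = (\<lambda>n. \<Phi>ac u n + \<Phi>ac v n)"
      unfolding Phiac_eq[OF linf_add[OF u v]] Phiac_eq[OF u] Phiac_eq[OF v]
      using lin_add[OF a bpow_linf[OF u] bpow_linf[OF v]] by (simp add: bpow_def add.commute)
  next
    fix c :: real and v assume v: "v \<in> linf"
    show "\<Phi>ac (\<lambda>n. c * v n) = (\<lambda>n. c * \<Phi>ac v n)"
      unfolding Phiac_eq[OF linf_mult[OF v]] Phiac_eq[OF v] by (simp add: lin_mult)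
  qed
  have ws: "wstar_map \<Phi>ac"
    unfolding wstar_map_def
  proof (intro conjI ballI)
    show "linear_on_linf \<Phi>ac" by (rule lin)
  next
    fix v assume "v \<in> linf" then show "\<Phi>ac v \<in> linf" by (rule bnd)
  next
    fix b assume b: "b \<in> lone"
    obtain c where c: "c \<in> lone"
      and hc: "\<forall>v\<in>linf. (\<Sum>\<^sub>\<infinity>n. b n * (\<Sum>\<^sub>\<infinity>m. a m * v (m + n))) = (\<Sum>\<^sub>\<infinity>k. c k * v k)"
      using conv_wstar[OF a b] by blast
    show "wstar_fun (\<lambda>v. \<Sum>\<^sub>\<infinity>n. b n * \<Phi>ac v n)"
      unfolding wstar_fun_def
    proof (intro bexI[OF _ c] ballI)
      fix v assume v: "v \<in> linf"
      show "(\<Sum>\<^sub>\<infinity>n. b n * \<Phi>ac v n) = (\<Sum>\<^sub>\<infinity>k. c k * v k)"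
        unfolding Phiac_eq[OF v] using hc v by simp
    qed
  qed
  have pc0: "\<forall>v\<in>c0. \<Phi>ac v \<in> c0"
  proof
    fix v assume v: "v \<in> c0"
    show "\<Phi>ac v \<in> c0" unfolding Phiac_eq[OF c0_linf[OF v]] by (rule conv_c0[OF a v])
  qed
  have sm: "singular_map \<Phi>s"
    unfolding singular_map_def
  proof
    fix v assume v: "v \<in> c0"
    show "\<Phi>s v = (\<lambda>n. 0)"
      unfolding \<Phi>s_def using sing bpow_c0[OF v] unfolding singular_fun_def by blast
  qed
  have uniq: "\<forall>v\<in>linf. \<Psi>1 v = \<Phi>ac v \<and> \<Psi>2 v = \<Phi>s v"
    if w1: "wstar_map \<Psi>1" and s2: "singular_map \<Psi>2"
      and d2: "\<forall>v\<in>linf. \<Phi> v = (\<lambda>n. \<Psi>1 v n + \<Psi>2 v n)" for \<Psi>1 \<Psi>2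
  proof -
    have P1: "\<Psi>1 v n = \<Phi>ac v n" if v: "v \<in> linf" for v n
    proof -
      have "wstar_fun (\<lambda>v. \<Sum>\<^sub>\<infinity>m. delta n m * \<Psi>1 v m)"
        using w1 delta_lone unfolding wstar_map_def by blast
      then obtain c where c: "c \<in> lone"
        and hc: "\<And>v. v \<in> linf \<Longrightarrow> (\<Sum>\<^sub>\<infinity>m. delta n m * \<Psi>1 v m) = (\<Sum>\<^sub>\<infinity>k. c k * v k)"
        unfolding wstar_fun_def by blast
      have hc': "\<Psi>1 v n = (\<Sum>\<^sub>\<infinity>k. c k * v k)" if "v \<in> linf" for v
        using hc[OF that] by (simp add: infsum_delta')
      have ck: "c k = a (k - n)" for k
      proof -
        have "c k = (\<Sum>\<^sub>\<infinity>j. c j * delta k j)" by (simp add: infsum_delta)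
        also have "\<dots> = \<Psi>1 (delta k) n" using hc'[OF delta_linf] by simp
        also have "\<dots> = \<Phi> (delta k) n"
          using d2 delta_linf[of k] s2 delta_c0[of k] unfolding singular_map_def by simp
        also have "\<dots> = \<Phi>ac (delta k) n"
          using dec[OF delta_linf[of k]] sm delta_c0[of k] unfolding singular_map_def by simp
        also have "\<dots> = (\<Sum>\<^sub>\<infinity>m. a m * delta k (m + n))"
          unfolding Phiac_eq[OF delta_linf] by simp
        also have "\<dots> = (\<Sum>\<^sub>\<infinity>j. a (j - n) * delta k j)" by (rule reindex_sum)
        also have "\<dots> = a (k - n)" by (rule infsum_delta)
        finally show ?thesis .
      qed
      have "\<Psi>1 v n = (\<Sum>\<^sub>\<infinity>k. a (k - n) * v k)" using hc'[OF v] ck by simp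
      also have "\<dots> = (\<Sum>\<^sub>\<infinity>m. a m * v (m + n))" by (rule reindex_sum[symmetric])
      also have "\<dots> = \<Phi>ac v n" unfolding Phiac_eq[OF v] by simp
      finally show ?thesis .
    qed
    show ?thesis
    proof (intro ballI conjI)
      fix v assume v: "v \<in> linf"
      show e1: "\<Psi>1 v = \<Phi>ac v" using P1[OF v] by (rule ext)
      show "\<Psi>2 v = \<Phi>s v"
      proof
        fix n
        have "\<Psi>1 v n + \<Psi>2 v n = \<Phi>ac v n + \<Phi>s v n"
          using fun_cong[OF d2[rule_format, OF v], of n] fun_cong[OF dec[OF v], of n] by simp
        then show "\<Psi>2 v n = \<Phi>s v n" using P1[OF v, of n] by simp
      qed
    qed
  qed
  show ?thesis using c1 c2 ws pc0 sm dec uniq by blast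
qed

end
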